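(* For all real numbers $a,b,c>0$, \[ \frac{\sqrt{6}\,(a+b+c)^2}{6\sqrt{a^4+b^4+c^4+a^2b^2+b^2c^2+c^2a^2}}\leq \frac{a}{\sqrt{2a^2+b^2+c^2}}+\frac{b}{\sqrt{2b^2+c^2+a^2}}+\frac{c}{\sqrt{2c^2+a^2+b^2}}. \] *)

theory Defs
  imports Complex_Main
begin

end

theory Submission
  imports Defs
begin

lemma titu1:
  fixes a u t :: real
  assumes "u > 0"
  shows "2*a*t - t^2*u \<le> a^2/u"
proof -
  have "0 \<le> (a - t*u)^2/u" using assms by simp
  also have "(a - t*u)^2/u = a^2/u - (2*a*t - t^2*u)"
    using assms by (simp add: field_simps power2_eq_square)
  finally show ?thesis by simp
qed

lemma titu:
  fixes a b c u v w :: real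
  assumes "u > 0" "v > 0" "w > 0"
  shows "(a+b+c)^2/(u+v+w) \<le> a^2/u + b^2/v + c^2/w"
proof -
  define t where "t = (a+b+c)/(u+v+w)"
  have s: "u+v+w \<noteq> 0" using assms by simp
  have ts: "t*(u+v+w) = a+b+c" using s unfolding t_def by simp
  have "(a+b+c)^2/(u+v+w) = (a+b+c)*t" unfolding t_def by (simp add: power2_eq_square)
  also have "\<dots> = 2*(a+b+c)*t - t*(t*(u+v+w))" using ts by (simp add: algebra_simps)
  also have "\<dots> = 2*(a+b+c)*t - t^2*(u+v+w)" by (simp add: power2_eq_square)
  finally have "(a+b+c)^2/(u+v+w) = 2*(a+b+c)*t - t^2*(u+v+w)" .
  also have "\<dots> = (2*a*t - t^2*u) + (2*b*t - t^2*v) + (2*c*t - t^2*w)"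
    by (simp add: algebra_simps)
  also have "\<dots> \<le> a^2/u + b^2/v + c^2/w"
    using titu1[OF assms(1)] titu1[OF assms(2)] titu1[OF assms(3)] by (meson add_mono)
  finally show ?thesis .
qed

theorem mainTheorem5:
  fixes a b c :: real
  assumes "a > 0" and "b > 0" and "c > 0"
  shows "sqrt 6 * (a + b + c)^2 / (6 * sqrt (a^4 + b^4 + c^4 + a^2*b^2 + b^2*c^2 + c^2*a^2))
         \<le> a / sqrt (2*a^2 + b^2 + c^2) + b / sqrt (2*b^2 + c^2 + a^2) + c / sqrt (2*c^2 + a^2 + b^2)"
proof -
  define Q where "Q = a^4 + b^4 + c^4 + a^2*b^2 + b^2*c^2 + c^2*a^2"
  define x where "x = sqrt (2*a^2 + b^2 + c^2)"
  define y where "y = sqrt (2*b^2 + c^2 + a^2)"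
  define z where "z = sqrt (2*c^2 + a^2 + b^2)"
  have xp: "x > 0" "y > 0" "z > 0" using assms unfolding x_def y_def z_def
    by (simp_all add: add_pos_nonneg)
  have x2: "x^2 = 2*a^2 + b^2 + c^2" "y^2 = 2*b^2 + c^2 + a^2" "z^2 = 2*c^2 + a^2 + b^2"
    unfolding x_def y_def z_def by simp_all
  define u where "u = a*x"
  define v where "v = b*y"
  define w where "w = c*z"
  have up: "u > 0" "v > 0" "w > 0" using xp assms unfolding u_def v_def w_def by simp_all
  have Qp: "Q > 0" unfolding Q_def using assms by (simp add: add_pos_nonneg)
  have sq: "u^2 + v^2 + w^2 = 2*Q"
    unfolding u_def v_def w_def Q_def power_mult_distrib x2 by algebra
  have "0 \<le> (u-v)^2+(v-w)^2+(w-u)^2" by simp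
  hence "(u+v+w)^2 \<le> 3*(u^2+v^2+w^2)" by (simp add: power2_eq_square algebra_simps)
  hence "(u+v+w)^2 \<le> (sqrt 6 * sqrt Q)^2"
    using sq Qp by (simp add: power_mult_distrib)
  hence le: "u+v+w \<le> sqrt 6 * sqrt Q"
    using up Qp by (meson power2_le_imp_le real_sqrt_ge_zero mult_nonneg_nonneg less_imp_le zero_le_numeral)
  have "sqrt 6 * (a + b + c)^2 / (6 * sqrt Q) = (a+b+c)^2 / (sqrt 6 * sqrt Q)"
  proof -
    have "(6::real) = sqrt 6 * sqrt 6" by simp
    thus ?thesis using Qp by (simp add: field_simps)
  qed
  also have "\<dots> \<le> (a+b+c)^2/(u+v+w)"
    using le up Qp by (intro divide_left_mono) (simp_all add: add_pos_pos)
  also have "\<dots> \<le> a^2/u + b^2/v + c^2/w" by (rule titu[OF up])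
  also have "a^2/u + b^2/v + c^2/w = a/x + b/y + c/z"
    using assms xp unfolding u_def v_def w_def by (simp add: power2_eq_square)
  finally show ?thesis unfolding Q_def x_def y_def z_def .
qed

end
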